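(* Let $(X,T)$ be a CAM $G$-system and let $H$ be a finite index normal subgroup of $G$, with left cosets $g_1H,\dots,g_mH$. Suppose $Y\subseteq X$ is a compact $H$-invariant subset containing a point whose $H$-orbit is infinite. Then $\bigcup_{i=1}^m T_{g_i}(Y)=X$, and the points of $Y$ with finite $H$-orbit are dense in $Y$.
   Context: Let $G$ be a countable discrete group. A topological $G$-system $(X,T)$ consists of a compact metric space $X$ and an action $T\colon G\to\mathrm{Homeo}(X)$, $g\mapsto T_g$. The system is topologically transitive if for all nonempty open $U,V\subseteq X$ there is $g\in G$ with $T_gU\cap V\neq\emptyset$; the action is faithful if $T_g=\mathrm{id}_X$ only when $g$ is the identity. A point is periodic if its $G$-orbit is finite. The system is chaotic almost minimal (CAM) if: (1) it is topologically transitive and the action is faithful; (2) the periodic points are dense in $X$; (3) every proper closed $T$-invariant subset of $X$ is finite. *)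

theory Defs
  imports "HOL-Analysis.Analysis" "HOL-Algebra.Coset"
begin

definition G_system :: "('g, 'b) monoid_scheme \<Rightarrow> ('x::metric_space) set \<Rightarrow> ('g \<Rightarrow> 'x \<Rightarrow> 'x) \<Rightarrow> bool" where
  "G_system G X T \<longleftrightarrow> group G \<and> countable (carrier G) \<and> compact X \<and>
     (\<forall>g\<in>carrier G. homeomorphism X X (T g) (T (inv\<^bsub>G\<^esub> g))) \<and>
     (\<forall>x\<in>X. T \<one>\<^bsub>G\<^esub> x = x) \<and>
     (\<forall>g\<in>carrier G. \<forall>h\<in>carrier G. \<forall>x\<in>X. T (g \<otimes>\<^bsub>G\<^esub> h) x = T g (T h x))"

definition orbit :: "('g \<Rightarrow> 'x \<Rightarrow> 'x) \<Rightarrow> 'g set \<Rightarrow> 'x \<Rightarrow> 'x set" where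
  "orbit T A x = (\<lambda>g. T g x) ` A"

definition top_transitive :: "('g, 'b) monoid_scheme \<Rightarrow> ('x::metric_space) set \<Rightarrow> ('g \<Rightarrow> 'x \<Rightarrow> 'x) \<Rightarrow> bool" where
  "top_transitive G X T \<longleftrightarrow> (\<forall>U V. openin (top_of_set X) U \<and> U \<noteq> {} \<and>
      openin (top_of_set X) V \<and> V \<noteq> {} \<longrightarrow> (\<exists>g\<in>carrier G. T g ` U \<inter> V \<noteq> {}))"

definition faithful :: "('g, 'b) monoid_scheme \<Rightarrow> 'x set \<Rightarrow> ('g \<Rightarrow> 'x \<Rightarrow> 'x) \<Rightarrow> bool" where
  "faithful G X T \<longleftrightarrow> (\<forall>g\<in>carrier G. (\<forall>x\<in>X. T g x = x) \<longrightarrow> g = \<one>\<^bsub>G\<^esub>)"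

definition periodic_points :: "('g, 'b) monoid_scheme \<Rightarrow> 'x set \<Rightarrow> ('g \<Rightarrow> 'x \<Rightarrow> 'x) \<Rightarrow> 'x set" where
  "periodic_points G X T = {x\<in>X. finite (orbit T (carrier G) x)}"

definition invariant :: "'g set \<Rightarrow> ('g \<Rightarrow> 'x \<Rightarrow> 'x) \<Rightarrow> 'x set \<Rightarrow> bool" where
  "invariant A T Z \<longleftrightarrow> (\<forall>g\<in>A. T g ` Z \<subseteq> Z)"

definition CAM :: "('g, 'b) monoid_scheme \<Rightarrow> ('x::metric_space) set \<Rightarrow> ('g \<Rightarrow> 'x \<Rightarrow> 'x) \<Rightarrow> bool" where
  "CAM G X T \<longleftrightarrow> G_system G X T \<and> top_transitive G X T \<and> faithful G X T \<and>
     X \<subseteq> closure (periodic_points G X T) \<and>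
     (\<forall>Z. closed Z \<and> Z \<subseteq> X \<and> Z \<noteq> X \<and> invariant (carrier G) T Z \<longrightarrow> finite Z)"

end

theory Submission
  imports Defs
begin

lemma cover_lemma:
  assumes "finite R"
  shows "(\<forall>r\<in>R. closedin (top_of_set X) (F r)) \<Longrightarrow> openin (top_of_set X) U \<Longrightarrow> U \<noteq> {}
     \<Longrightarrow> U \<subseteq> (\<Union>r\<in>R. F r) \<Longrightarrow> \<exists>r\<in>R. \<exists>W. openin (top_of_set X) W \<and> W \<noteq> {} \<and> W \<subseteq> F r"
  using assms
proof (induction R arbitrary: U rule: finite_induct)
  case empty
  then show ?case by auto
next
  case (insert a R)
  show ?case
  proof (cases "U \<subseteq> (\<Union>r\<in>R. F r)")
    case True
    then show ?thesis using insert by (metis insert_iff)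
  next
    case False
    have "closedin (top_of_set X) (\<Union>r\<in>R. F r)"
      using insert by (intro closedin_Union) auto
    then have "openin (top_of_set X) (U - (\<Union>r\<in>R. F r))"
      using insert by (intro openin_diff) auto
    moreover have "U - (\<Union>r\<in>R. F r) \<subseteq> F a" using insert by auto
    ultimately show ?thesis using False by blast
  qed
qed

lemma part1:
  fixes G :: "('g, 'b) monoid_scheme" and X Y :: "('x::metric_space) set"
    and T :: "'g \<Rightarrow> 'x \<Rightarrow> 'x" and H R :: "'g set"
  assumes "CAM G X T"
    and "H \<lhd> G"
    and "finite R" and "R \<subseteq> carrier G"
    and "bij_betw (\<lambda>r. r <#\<^bsub>G\<^esub> H) R {g <#\<^bsub>G\<^esub> H | g. g \<in> carrier G}"
    and "compact Y" and "Y \<subseteq> X" and "invariant H T Y"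
    and "\<exists>y\<in>Y. infinite (orbit T H y)"
  shows "(\<Union>r\<in>R. T r ` Y) = X"
proof -
  have sys: "G_system G X T" using assms(1) unfolding CAM_def by blast
  have grp: "group G" using sys unfolding G_system_def by blast
  have sub: "subgroup H G" using assms(2) normal_imp_subgroup by blast
  have Hc: "H \<subseteq> carrier G" using sub subgroup.subset by blast
  have hom: "\<And>g. g \<in> carrier G \<Longrightarrow> homeomorphism X X (T g) (T (inv\<^bsub>G\<^esub> g))"
    using sys unfolding G_system_def by blast
  have mul: "\<And>g h x. g \<in> carrier G \<Longrightarrow> h \<in> carrier G \<Longrightarrow> x \<in> X \<Longrightarrow> T (g \<otimes>\<^bsub>G\<^esub> h) x = T g (T h x)"
    using sys unfolding G_system_def by blast
  have TX: "\<And>g x. g \<in> carrier G \<Longrightarrow> x \<in> X \<Longrightarrow> T g x \<in> X"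
    using hom unfolding homeomorphism_def by blast
  have injT: "\<And>g. g \<in> carrier G \<Longrightarrow> inj_on (T g) X"
  proof -
    fix g assume g: "g \<in> carrier G"
    show "inj_on (T g) X"
    proof (rule inj_on_inverseI)
      fix x assume "x \<in> X" then show "T (inv\<^bsub>G\<^esub> g) (T g x) = x" using hom[OF g] unfolding homeomorphism_def by blast
    qed
  qed
  have contT: "\<And>g. g \<in> carrier G \<Longrightarrow> continuous_on X (T g)"
    using hom unfolding homeomorphism_def by blast
  have invY: "\<And>h y. h \<in> H \<Longrightarrow> y \<in> Y \<Longrightarrow> T h y \<in> Y"
    using assms(8) unfolding invariant_def by blast
  define Z where "Z = (\<Union>r\<in>R. T r ` Y)"
  have "compact Z" unfolding Z_def
  proof (intro compact_UN assms(3))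
    fix r assume "r \<in> R"
    show "compact (T r ` Y)"
    proof (rule compact_continuous_image)
      show "continuous_on Y (T r)" using contT[of r] \<open>r \<in> R\<close> assms(4,7) continuous_on_subset by blast
    qed (rule assms(6))
  qed
  then have cZ: "closed Z" by (rule compact_imp_closed)
  have ZX: "Z \<subseteq> X" unfolding Z_def using assms(4,7) TX by blast
  have key: "\<And>g r. g \<in> carrier G \<Longrightarrow> r \<in> R \<Longrightarrow> \<exists>r'\<in>R. \<exists>h\<in>H. g \<otimes>\<^bsub>G\<^esub> r = r' \<otimes>\<^bsub>G\<^esub> h"
  proof -
    fix g r assume g: "g \<in> carrier G" and r: "r \<in> R"
    have rG: "r \<in> carrier G" using r assms(4) by blast
    have gr: "g \<otimes>\<^bsub>G\<^esub> r \<in> carrier G" using monoid.m_closed[OF group.is_monoid[OF grp] g rG] .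
    have "(g \<otimes>\<^bsub>G\<^esub> r) <#\<^bsub>G\<^esub> H \<in> {g <#\<^bsub>G\<^esub> H | g. g \<in> carrier G}" using gr by blast
    also have "{g <#\<^bsub>G\<^esub> H | g. g \<in> carrier G} = (\<lambda>r. r <#\<^bsub>G\<^esub> H) ` R"
      using assms(5) unfolding bij_betw_def by (rule conjE) (rule sym)
    finally obtain r' where r': "r' \<in> R" "(g \<otimes>\<^bsub>G\<^esub> r) <#\<^bsub>G\<^esub> H = r' <#\<^bsub>G\<^esub> H"
      by (rule imageE) 
    have e: "g \<otimes>\<^bsub>G\<^esub> r = (g \<otimes>\<^bsub>G\<^esub> r) \<otimes>\<^bsub>G\<^esub> \<one>\<^bsub>G\<^esub>"
      using monoid.r_one[OF group.is_monoid[OF grp] gr] by (rule sym)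
    have o: "\<one>\<^bsub>G\<^esub> \<in> H" using sub by (rule subgroup.one_closed)
    have "g \<otimes>\<^bsub>G\<^esub> r \<in> (g \<otimes>\<^bsub>G\<^esub> r) <#\<^bsub>G\<^esub> H" unfolding l_coset_def using e o by blast
    then have "g \<otimes>\<^bsub>G\<^esub> r \<in> r' <#\<^bsub>G\<^esub> H" using r'(2) by simp
    then obtain h where "h \<in> H" "g \<otimes>\<^bsub>G\<^esub> r = r' \<otimes>\<^bsub>G\<^esub> h" unfolding l_coset_def by blast
    then show "\<exists>r'\<in>R. \<exists>h\<in>H. g \<otimes>\<^bsub>G\<^esub> r = r' \<otimes>\<^bsub>G\<^esub> h" using r'(1) by blast
  qed
  have invZ: "invariant (carrier G) T Z"
    unfolding invariant_def
  proof (intro ballI subsetI)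
    fix g z assume g: "g \<in> carrier G" and "z \<in> T g ` Z"
    then obtain r y where r: "r \<in> R" and y: "y \<in> Y" and z: "z = T g (T r y)" unfolding Z_def by blast
    obtain r' h where r': "r' \<in> R" "h \<in> H" "g \<otimes>\<^bsub>G\<^esub> r = r' \<otimes>\<^bsub>G\<^esub> h" using key g r by blast
    have rG: "r \<in> carrier G" "r' \<in> carrier G" "h \<in> carrier G" "y \<in> X" using r r' assms(4,7) y Hc by auto
    have "z = T (g \<otimes>\<^bsub>G\<^esub> r) y" using z mul[OF g rG(1) rG(4)] by simp
    also have "\<dots> = T r' (T h y)" using r'(3) mul[OF rG(2) rG(3) rG(4)] by simp
    finally show "z \<in> Z" unfolding Z_def using r' invY y by blast
  qed
  obtain y where y: "y \<in> Y" "infinite (orbit T H y)" using assms(9) by blast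
  have "orbit T H y \<subseteq> Y" unfolding orbit_def using invY y by blast
  then have infY: "infinite Y" using y finite_subset by blast
  have "\<one>\<^bsub>G\<^esub> <#\<^bsub>G\<^esub> H \<in> {g <#\<^bsub>G\<^esub> H | g. g \<in> carrier G}"
    using grp group.is_monoid monoid.one_closed by blast
  then obtain r where r: "r \<in> R" using assms(5) unfolding bij_betw_def by blast
  have "infinite (T r ` Y)"
  proof
    assume "finite (T r ` Y)"
    moreover have "inj_on (T r) Y" using injT[of r] r assms(4,7) inj_on_subset by blast
    ultimately show False using infY finite_imageD by blast
  qed
  moreover have "T r ` Y \<subseteq> Z" unfolding Z_def using r by blast
  ultimately have "infinite Z" using finite_subset by blast
  then have "Z = X" using assms(1) cZ ZX invZ unfolding CAM_def by blast
  then show ?thesis unfolding Z_def .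
qed

theorem lemma3p2:
  fixes G :: "('g, 'b) monoid_scheme" and X Y :: "('x::metric_space) set"
    and T :: "'g \<Rightarrow> 'x \<Rightarrow> 'x" and H R :: "'g set"
  assumes "CAM G X T"
    and "H \<lhd> G"
    and "finite R" and "R \<subseteq> carrier G"
    and "bij_betw (\<lambda>r. r <#\<^bsub>G\<^esub> H) R {g <#\<^bsub>G\<^esub> H | g. g \<in> carrier G}"
    and "compact Y" and "Y \<subseteq> X" and "invariant H T Y"
    and "\<exists>y\<in>Y. infinite (orbit T H y)"
  shows "(\<Union>r\<in>R. T r ` Y) = X \<and> Y \<subseteq> closure {y\<in>Y. finite (orbit T H y)}"
proof
  show "(\<Union>r\<in>R. T r ` Y) = X" using part1[OF assms] .
  have sys: "G_system G X T" using assms(1) unfolding CAM_def by blast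
  have dens: "X \<subseteq> closure (periodic_points G X T)" using assms(1) unfolding CAM_def by blast
  have grp: "group G" using sys unfolding G_system_def by blast
  have sub: "subgroup H G" using assms(2) normal_imp_subgroup by blast
  have Hc: "H \<subseteq> carrier G" using sub subgroup.subset by blast
  have hom: "\<And>g. g \<in> carrier G \<Longrightarrow> homeomorphism X X (T g) (T (inv\<^bsub>G\<^esub> g))"
    using sys unfolding G_system_def by blast
  have mul: "\<And>g h x. g \<in> carrier G \<Longrightarrow> h \<in> carrier G \<Longrightarrow> x \<in> X \<Longrightarrow> T (g \<otimes>\<^bsub>G\<^esub> h) x = T g (T h x)"
    using sys unfolding G_system_def by blast
  have one: "\<And>x. x \<in> X \<Longrightarrow> T \<one>\<^bsub>G\<^esub> x = x" using sys unfolding G_system_def by blast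
  have TX: "\<And>g x. g \<in> carrier G \<Longrightarrow> x \<in> X \<Longrightarrow> T g x \<in> X"
    using hom unfolding homeomorphism_def by blast
  have TiT: "\<And>g x. g \<in> carrier G \<Longrightarrow> x \<in> X \<Longrightarrow> T (inv\<^bsub>G\<^esub> g) (T g x) = x"
    using hom unfolding homeomorphism_def by blast
  have injT: "\<And>g. g \<in> carrier G \<Longrightarrow> inj_on (T g) X"
  proof -
    fix g assume g: "g \<in> carrier G"
    show "inj_on (T g) X"
    proof (rule inj_on_inverseI)
      fix x assume "x \<in> X" then show "T (inv\<^bsub>G\<^esub> g) (T g x) = x" using hom[OF g] unfolding homeomorphism_def by blast
    qed
  qed
  have contT: "\<And>g. g \<in> carrier G \<Longrightarrow> continuous_on X (T g)"
    using hom unfolding homeomorphism_def by blast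
  have surjT: "\<And>g. g \<in> carrier G \<Longrightarrow> T g ` X = X"
    using hom unfolding homeomorphism_def by blast
  have invY: "\<And>h y. h \<in> H \<Longrightarrow> y \<in> Y \<Longrightarrow> T h y \<in> Y"
    using assms(8) unfolding invariant_def by blast
  have Hinv: "\<And>h. h \<in> H \<Longrightarrow> inv\<^bsub>G\<^esub> h \<in> H" by (rule subgroup.m_inv_closed[OF sub])
  have Hmul: "\<And>h k. h \<in> H \<Longrightarrow> k \<in> H \<Longrightarrow> h \<otimes>\<^bsub>G\<^esub> k \<in> H" by (rule subgroup.m_closed[OF sub])
  have H1: "\<one>\<^bsub>G\<^esub> \<in> H" by (rule subgroup.one_closed[OF sub])
  have cY: "closed Y" using assms(6) by (rule compact_imp_closed)
  show "Y \<subseteq> closure {y\<in>Y. finite (orbit T H y)}"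
  proof
    fix y assume yY: "y \<in> Y"
    have yX: "y \<in> X" using yY assms(7) by blast
    show "y \<in> closure {y\<in>Y. finite (orbit T H y)}"
    proof (cases "finite (orbit T H y)")
      case True
      then have "y \<in> {y\<in>Y. finite (orbit T H y)}" using yY by simp
      then show ?thesis using closure_subset by (rule subsetD[rotated])
    next
      case False
      define C where "C = closure (orbit T H y)"
      have orbY: "orbit T H y \<subseteq> Y" unfolding orbit_def using invY yY by blast
      have CY: "C \<subseteq> Y" unfolding C_def using orbY cY by (rule closure_minimal)
      then have CX: "C \<subseteq> X" using assms(7) by blast
      have "compact (Y \<inter> C)" using assms(6) unfolding C_def by (intro compact_Int_closed) auto
      moreover have "Y \<inter> C = C" using CY by (rule Int_absorb1)
      ultimately have cC: "compact C" by simp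
      have invC: "invariant H T C" unfolding invariant_def
      proof
        fix h assume h: "h \<in> H"
        have "T h ` closure (orbit T H y) \<subseteq> C" unfolding C_def
        proof (rule image_closure_subset)
          show "continuous_on (closure (orbit T H y)) (T h)"
          proof (rule continuous_on_subset)
            show "continuous_on X (T h)" using contT h Hc by blast
            show "closure (orbit T H y) \<subseteq> X" using CX unfolding C_def .
          qed
          show "closed (closure (orbit T H y))" by simp
          show "T h ` orbit T H y \<subseteq> closure (orbit T H y)"
          proof
            fix z assume "z \<in> T h ` orbit T H y"
            then obtain k where k: "k \<in> H" "z = T h (T k y)" unfolding orbit_def by blast
            have hkG: "h \<in> carrier G" "k \<in> carrier G" using h k(1) Hc by auto
            have "z = T (h \<otimes>\<^bsub>G\<^esub> k) y" using k(2) mul[OF hkG yX] by simp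
            then have "z \<in> orbit T H y" unfolding orbit_def using Hmul h k by blast
            then show "z \<in> closure (orbit T H y)" using closure_subset by (rule subsetD[rotated])
          qed
        qed
        then show "T h ` C \<subseteq> C" unfolding C_def .
      qed
      have "T \<one>\<^bsub>G\<^esub> y \<in> orbit T H y" unfolding orbit_def using H1 by (rule imageI)
      then have "y \<in> orbit T H y" using one[OF yX] by simp
      then have yC: "y \<in> C" unfolding C_def using closure_subset by (rule subsetD[rotated])
      have "\<exists>y\<in>C. infinite (orbit T H y)" using yC False by blast
      then have cov: "(\<Union>r\<in>R. T r ` C) = X"
        by (rule part1[OF assms(1-5) cC CX invC])
      have "\<forall>r\<in>R. closedin (top_of_set X) (T r ` C)"
      proof
        fix r assume r: "r \<in> R"
        have rG: "r \<in> carrier G" using r assms(4) by blast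
        have "compact (T r ` C)"
        proof (rule compact_continuous_image)
          show "continuous_on C (T r)" using contT[OF rG] CX by (rule continuous_on_subset)
        qed (rule cC)
        then have cl: "closed (T r ` C)" by (rule compact_imp_closed)
        have "T r ` C \<subseteq> X" using cov r by blast
        then show "closedin (top_of_set X) (T r ` C)" using cl by (rule closed_subset)
      qed
      then obtain r W where r: "r \<in> R" and W: "openin (top_of_set X) W" "W \<noteq> {}" "W \<subseteq> T r ` C"
      proof -
        have o: "openin (top_of_set X) X" by simp
        have ne: "X \<noteq> {}" using yX by blast
        have sb: "X \<subseteq> (\<Union>r\<in>R. T r ` C)" using cov by simp
        show ?thesis using cover_lemma[OF assms(3) \<open>\<forall>r\<in>R. closedin (top_of_set X) (T r ` C)\<close> o ne sb] that by blast
      qed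
      have rG: "r \<in> carrier G" using r assms(4) by blast
      define W' where "W' = X \<inter> T r -` W"
      have W'o: "openin (top_of_set X) W'" unfolding W'_def
      proof -
        have "T r \<in> X \<rightarrow> X" using TX rG by blast
        then show "openin (top_of_set X) (X \<inter> T r -` W)" by (rule continuous_openin_preimage[OF contT[OF rG] _ W(1)])
      qed
      have W'C: "W' \<subseteq> C"
      proof
        fix x assume x: "x \<in> W'"
        then have xX: "x \<in> X" and "T r x \<in> W" unfolding W'_def by auto
        have "T r x \<in> T r ` C" using W(3) \<open>T r x \<in> W\<close> by (rule subsetD)
        then obtain c where c: "c \<in> C" "T r x = T r c" by (rule imageE) (rule that, assumption, simp)
        have cX: "c \<in> X" using c(1) CX by (rule subsetD[rotated])
        have "x = c" using inj_onD[OF injT[OF rG] c(2) xX cX] .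
        then show "x \<in> C" using c(1) by simp
      qed
      obtain w where w: "w \<in> W" using W(2) by blast
      have "W \<subseteq> X" using W(1) by (rule openin_imp_subset)
      then have "w \<in> X" using w by (rule subsetD)
      then have "w \<in> T r ` X" using surjT[OF rG] by simp
      then obtain x where x: "x \<in> X" "T r x = w" by (rule imageE) (rule that, assumption, simp)
      have "x \<in> W'" unfolding W'_def using x w by blast
      then obtain z where zW: "z \<in> W'" by blast
      obtain U where U: "open U" "W' = X \<inter> U" using W'o unfolding openin_open by (elim exE conjE) (rule that)
      have "z \<in> closure (orbit T H y)" using zW W'C unfolding C_def by blast
      then have nh: "\<forall>A. \<forall>S\<subseteq>A. open S \<longrightarrow> z \<in> S \<longrightarrow> orbit T H y \<inter> A \<noteq> {}"
        unfolding closure_iff_nhds_not_empty .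
      have zU: "z \<in> U" using zW U(2) by simp
      have "orbit T H y \<inter> U \<noteq> {}" by (rule nh[rule_format, OF subset_refl U(1) zU])
      then obtain h where h: "h \<in> H" "T h y \<in> U" unfolding orbit_def by blast
      have hG: "h \<in> carrier G" using h Hc by blast
      have hyW: "T h y \<in> W'" using U h TX hG yX by blast
      define V where "V = X \<inter> T h -` W'"
      have Vo: "openin (top_of_set X) V" unfolding V_def
      proof -
        have "T h \<in> X \<rightarrow> X" using TX hG by blast
        then show "openin (top_of_set X) (X \<inter> T h -` W')" by (rule continuous_openin_preimage[OF contT[OF hG] _ W'o])
      qed
      have VC: "V \<subseteq> C"
      proof
        fix v assume v: "v \<in> V"
        then have "T h v \<in> C" unfolding V_def using W'C by blast
        then have "T (inv\<^bsub>G\<^esub> h) (T h v) \<in> C" using invC Hinv h unfolding invariant_def by blast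
        then show "v \<in> C" using TiT hG v unfolding V_def by auto
      qed
      have yV: "y \<in> V" unfolding V_def using yX hyW by blast
      obtain U2 where U2: "open U2" "V = X \<inter> U2" using Vo unfolding openin_open by (elim exE conjE) (rule that)
      show ?thesis unfolding closure_iff_nhds_not_empty
      proof (intro allI impI)
        fix A S assume SA: "S \<subseteq> A" and So: "open S" and yS: "y \<in> S"
        have "y \<in> closure (periodic_points G X T)" using dens yX by blast
        then have nh: "\<forall>A. \<forall>S\<subseteq>A. open S \<longrightarrow> y \<in> S \<longrightarrow> periodic_points G X T \<inter> A \<noteq> {}"
          unfolding closure_iff_nhds_not_empty .
        have "open (S \<inter> U2)" using So U2(1) by (rule open_Int)
        moreover have "y \<in> S \<inter> U2" using yS yV U2(2) by simp
        ultimately have "periodic_points G X T \<inter> (S \<inter> U2) \<noteq> {}" by (rule nh[rule_format, OF subset_refl])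
        then obtain p where p: "p \<in> periodic_points G X T" "p \<in> S" "p \<in> U2" by blast
        have pX: "p \<in> X" and pf: "finite (orbit T (carrier G) p)"
          using p(1) unfolding periodic_points_def by auto
        have "p \<in> V" using U2 p pX by blast
        then have pY: "p \<in> Y" using VC CY by blast
        have "orbit T H p \<subseteq> orbit T (carrier G) p" unfolding orbit_def using Hc by blast
        then have "finite (orbit T H p)" using pf finite_subset by blast
        then show "{y \<in> Y. finite (orbit T H y)} \<inter> A \<noteq> {}" using pY p SA by blast
      qed
    qed
  qed
qed

end
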